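(* The set $\{\ket{\psi_{00}},\ket{\psi_{02}},\ket{\psi_{20}},\ket{\psi_{22}}\}$ of generalized Bell states in $\mathbb{C}^4\otimes\mathbb{C}^4$ is perfectly distinguishable by one-way LOCC using only projective measurements.
   Context: Generalized Bell states in $\mathbb{C}^4\otimes\mathbb{C}^4$ (Alice holds the first factor, Bob the second): $\ket{\psi_{nm}}=\frac12\sum_{j=0}^{3}e^{2\pi i jn/4}\ket{j}_A\ket{j\oplus_4 m}_B$ for $n,m\in\{0,1,2,3\}$, where $j\oplus_4 m=(j+m)\bmod 4$. Perfect distinguishability by one-way LOCC using only projective measurements means: one party performs a projective measurement on her subsystem, communicates the outcome classically, and the other party then performs a projective measurement (depending on that outcome) whose result identifies with certainty which state of the set was shared. *)

theory Defs
  imports Complex_Main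
begin

text \<open>Operators on C^d are represented as functions nat => nat => complex (entries i j with
i, j < d); states in C^4 (x) C^4 as functions nat => nat => complex, where psi j k is the
coefficient of |j>_A |k>_B (j, k < 4).\<close>

type_synonym op = "nat \<Rightarrow> nat \<Rightarrow> complex"
type_synonym bstate = "nat \<Rightarrow> nat \<Rightarrow> complex"

definition projective_measurement :: "nat \<Rightarrow> nat \<Rightarrow> (nat \<Rightarrow> op) \<Rightarrow> bool" where
  "projective_measurement d m P \<longleftrightarrow>
     (\<forall>a<m. \<forall>i<d. \<forall>j<d. P a i j = cnj (P a j i)) \<and>
     (\<forall>a<m. \<forall>b<m. \<forall>i<d. \<forall>j<d.
        (\<Sum>l<d. P a i l * P b l j) = (if a = b then P a i j else 0)) \<and>
     (\<forall>i<d. \<forall>j<d. (\<Sum>a<m. P a i j) = (if i = j then 1 else 0))"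

definition outcome_prob :: "op \<Rightarrow> op \<Rightarrow> bstate \<Rightarrow> real" where
  "outcome_prob A B psi =
     (\<Sum>j<4. \<Sum>k<4. (cmod (\<Sum>j'<4. \<Sum>k'<4. A j j' * B k k' * psi j' k'))\<^sup>2)"

text \<open>One-way LOCC with projective measurements, Alice first: Alice measures (m outcomes),
tells Bob outcome a, Bob measures with a measurement depending on a (n a outcomes),
and the guess g a b identifies the state with certainty: every outcome pair occurring
with nonzero probability for state l is assigned the label l.\<close>
definition one_way_AB_distinguishable :: "'l set \<Rightarrow> ('l \<Rightarrow> bstate) \<Rightarrow> bool" where
  "one_way_AB_distinguishable L psi \<longleftrightarrow>
     (\<exists>m P n Q g. projective_measurement 4 m P \<and>
        (\<forall>a<m. projective_measurement 4 (n a) (Q a)) \<and>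
        (\<forall>a<m. \<forall>b<n a. \<forall>l\<in>L.
            outcome_prob (P a) (Q a b) (psi l) \<noteq> 0 \<longrightarrow> g a b = l))"

definition one_way_BA_distinguishable :: "'l set \<Rightarrow> ('l \<Rightarrow> bstate) \<Rightarrow> bool" where
  "one_way_BA_distinguishable L psi \<longleftrightarrow>
     (\<exists>m Q n P g. projective_measurement 4 m Q \<and>
        (\<forall>b<m. projective_measurement 4 (n b) (P b)) \<and>
        (\<forall>b<m. \<forall>a<n b. \<forall>l\<in>L.
            outcome_prob (P b a) (Q b) (psi l) \<noteq> 0 \<longrightarrow> g b a = l))"

definition one_way_proj_LOCC_distinguishable :: "'l set \<Rightarrow> ('l \<Rightarrow> bstate) \<Rightarrow> bool" where
  "one_way_proj_LOCC_distinguishable L psi \<longleftrightarrow>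
     one_way_AB_distinguishable L psi \<or> one_way_BA_distinguishable L psi"

definition bell4 :: "nat \<times> nat \<Rightarrow> bstate" where
  "bell4 nm j k =
     (if j < 4 \<and> k < 4 \<and> k = (j + snd nm) mod 4
      then cis (2 * pi * real j * real (fst nm) / 4) / 2 else 0)"

end

theory Submission
  imports Defs
begin

lemma all4: "(\<forall>a<(4::nat). P a) \<longleftrightarrow> P 0 \<and> P 1 \<and> P 2 \<and> P 3"
  by (auto simp: less_Suc_eq numeral_eq_Suc)

lemma sum4: "(\<Sum>a<(4::nat). f a) = f 0 + f 1 + f 2 + f 3"
  by (simp add: numeral_eq_Suc)

definition PP :: "nat \<Rightarrow> op" where
  "PP c i j = (if i div 2 = c div 2 \<and> j div 2 = c div 2 then
     (if even ((c mod 2) * (i + j)) then 1/2 else -1/2) else 0)"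

definition gg :: "nat \<Rightarrow> nat \<Rightarrow> nat \<times> nat" where
  "gg a b = ((if a mod 2 = b mod 2 then 0 else 2), (if a div 2 = b div 2 then 0 else 2))"

lemma cis_pi_nat: "cis (pi * real j) = (-1) ^ j"
proof -
  have "cis pi ^ j = cis (real j * pi)" by (rule DeMoivre)
  thus ?thesis by (simp add: mult.commute)
qed

lemma bell_0: "bell4 (0, m) j k = (if j < 4 \<and> k < 4 \<and> k = (j + m) mod 4 then 1/2 else 0)"
  by (simp add: bell4_def)

lemma bell_2: "bell4 (2, m) j k = (if j < 4 \<and> k < 4 \<and> k = (j + m) mod 4 then (-1)^j/2 else 0)"
proof -
  have "2 * pi * real j * real (2::nat) / 4 = pi * real j" by simp
  hence "cis (2 * pi * real j * real (2::nat) / 4) = (-1)^j" using cis_pi_nat by metis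
  thus ?thesis unfolding bell4_def fst_conv snd_conv by presburger
qed

lemma pm: "projective_measurement 4 4 PP"
  unfolding projective_measurement_def all4 sum4 by (simp add: PP_def)

lemma amp_00: "\<forall>a<4. \<forall>b<4. \<forall>j<4. \<forall>k<4. gg a b \<noteq> (0,0) \<longrightarrow> (\<Sum>j'<4. \<Sum>k'<4. PP a j j' * PP b k k' * bell4 (0,0) j' k') = 0"
  unfolding all4 sum4 by (simp add: PP_def bell_0 bell_2 gg_def)

lemma amp_02: "\<forall>a<4. \<forall>b<4. \<forall>j<4. \<forall>k<4. gg a b \<noteq> (0,2) \<longrightarrow> (\<Sum>j'<4. \<Sum>k'<4. PP a j j' * PP b k k' * bell4 (0,2) j' k') = 0"
  unfolding all4 sum4 by (simp add: PP_def bell_0 bell_2 gg_def)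

lemma amp_20: "\<forall>a<4. \<forall>b<4. \<forall>j<4. \<forall>k<4. gg a b \<noteq> (2,0) \<longrightarrow> (\<Sum>j'<4. \<Sum>k'<4. PP a j j' * PP b k k' * bell4 (2,0) j' k') = 0"
  unfolding all4 sum4 by (simp add: PP_def bell_0 bell_2 gg_def)

lemma amp_22: "\<forall>a<4. \<forall>b<4. \<forall>j<4. \<forall>k<4. gg a b \<noteq> (2,2) \<longrightarrow> (\<Sum>j'<4. \<Sum>k'<4. PP a j j' * PP b k k' * bell4 (2,2) j' k') = 0"
  unfolding all4 sum4 by (simp add: PP_def bell_0 bell_2 gg_def)

lemma amp0:
  assumes "a < 4" "b < 4" "j < 4" "k < 4" "l \<in> {(0,0), (0,2), (2,0), (2,2)}" "gg a b \<noteq> l"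
  shows "(\<Sum>j'<4. \<Sum>k'<4. PP a j j' * PP b k k' * bell4 l j' k') = 0"
  using assms(5) proof (elim insertE emptyE)
  assume "l = (0,0)" thus ?thesis using assms amp_00 by simp
next
  assume "l = (0,2)" thus ?thesis using assms amp_02 by simp
next
  assume "l = (2,0)" thus ?thesis using assms amp_20 by simp
next
  assume "l = (2,2)" thus ?thesis using assms amp_22 by simp
qed

theorem theorem8:
  shows "one_way_proj_LOCC_distinguishable {(0,0), (0,2), (2,0), (2,2)} bell4"
  unfolding one_way_proj_LOCC_distinguishable_def one_way_AB_distinguishable_def
proof (intro disjI1 exI[of _ 4] exI[of _ PP] exI[of _ "\<lambda>_. 4"] exI[of _ "\<lambda>_. PP"] exI[of _ gg] conjI allI impI ballI)
  show "projective_measurement 4 4 PP" by (rule pm)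
  show "projective_measurement 4 4 PP" for a by (rule pm)
  fix a b l assume ab: "a < 4" "b < 4" and l: "l \<in> {(0::nat,0::nat), (0,2), (2,0), (2,2)}"
    and ne: "outcome_prob (PP a) (PP b) (bell4 l) \<noteq> 0"
  show "gg a b = l"
  proof (rule ccontr)
    assume "gg a b \<noteq> l"
    hence "outcome_prob (PP a) (PP b) (bell4 l) = 0"
      unfolding outcome_prob_def
      by (intro sum.neutral ballI) (simp add: amp0[OF ab _ _ l \<open>gg a b \<noteq> l\<close>])
    thus False using ne by simp
  qed
qed

end
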